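(* Let $n\ge1$, $d=2^n$, and let $|\psi\rangle$ be an $n$-qubit pure state. Then $|St(|\psi\rangle)|\le d^2/\mathrm{card}(|\psi\rangle)$; equivalently $M_0(|\psi\rangle)\le \nu(|\psi\rangle)$. Consequently $M_\alpha(|\psi\rangle)\le\nu(|\psi\rangle)$ for every $\alpha\ge0$.
   Context: Logarithms are base 2. $\mathcal{P}_n$ is the set of $4^n$ $n$-qubit Pauli strings $\sigma_1\otimes\cdots\otimes\sigma_n$, $\sigma_i\in\{I,X,Y,Z\}$ (no phases). $\Xi_P(|\psi\rangle)=d^{-1}\langle\psi|P|\psi\rangle^2$. The stabilizer $\alpha$-Rényi entropy is $M_\alpha(|\psi\rangle)=\frac{1}{1-\alpha}\log\sum_{P\in\mathcal{P}_n}\Xi_P^\alpha-\log d$ for $\alpha\ne1$ (for $\alpha=0$ summing only over $P$ with $\Xi_P\neq0$), and $M_1=-\sum_P\Xi_P\log\Xi_P-\log d$. $\mathrm{card}(|\psi\rangle)=|\{P\in\mathcal{P}_n:\langle\psi|P|\psi\rangle\ne0\}|$, so $M_0(|\psi\rangle)=\log(\mathrm{card}(|\psi\rangle)/d)$. $St(|\psi\rangle)=\{P\in\mathcal{P}_n: P|\psi\rangle=\pm|\psi\rangle\}$, and the stabilizer nullity is $\nu(|\psi\rangle)=n-\log|St(|\psi\rangle)|$. *)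

theory Defs
  imports "HOL-Analysis.Analysis"
begin

datatype pauli = PI | PX | PY | PZ

text \<open>Matrix entry (row r, column c) of a single-qubit Pauli; False = basis state 0, True = 1.\<close>
fun pauli_entry :: "pauli \<Rightarrow> bool \<Rightarrow> bool \<Rightarrow> complex" where
  "pauli_entry PI r c = (if r = c then 1 else 0)"
| "pauli_entry PX r c = (if r \<noteq> c then 1 else 0)"
| "pauli_entry PY r c = (if r = c then 0 else if r then \<i> else - \<i>)"
| "pauli_entry PZ r c = (if r = c then (if r then -1 else 1) else 0)"

text \<open>n-qubit Pauli strings: lists of length n. Computational basis states of n qubits are
  indexed by x < 2^n, qubit i being bit i of x.\<close>
definition pauli_strings :: "nat \<Rightarrow> pauli list set" where
  "pauli_strings n = {P. length P = n}"

definition pstr_entry :: "nat \<Rightarrow> pauli list \<Rightarrow> nat \<Rightarrow> nat \<Rightarrow> complex" where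
  "pstr_entry n P x y = (\<Prod>i<n. pauli_entry (P ! i) (bit x i) (bit y i))"

text \<open>A state vector is a function nat => complex (only indices < 2^n matter).\<close>
definition apply_pstr :: "nat \<Rightarrow> pauli list \<Rightarrow> (nat \<Rightarrow> complex) \<Rightarrow> nat \<Rightarrow> complex" where
  "apply_pstr n P psi x = (\<Sum>y<2^n. pstr_entry n P x y * psi y)"

definition pure_state :: "nat \<Rightarrow> (nat \<Rightarrow> complex) \<Rightarrow> bool" where
  "pure_state n psi \<longleftrightarrow> (\<Sum>x<2^n. (cmod (psi x))\<^sup>2) = 1"

definition expval :: "nat \<Rightarrow> (nat \<Rightarrow> complex) \<Rightarrow> pauli list \<Rightarrow> complex" where
  "expval n psi P = (\<Sum>x<2^n. cnj (psi x) * apply_pstr n P psi x)"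

text \<open>Xi_P(psi) = d^{-1} <psi|P|psi>^2, d = 2^n (the expectation value is real).\<close>
definition Xi :: "nat \<Rightarrow> (nat \<Rightarrow> complex) \<Rightarrow> pauli list \<Rightarrow> real" where
  "Xi n psi P = Re ((expval n psi P)\<^sup>2) / 2 ^ n"

definition pauli_card :: "nat \<Rightarrow> (nat \<Rightarrow> complex) \<Rightarrow> nat" where
  "pauli_card n psi = card {P \<in> pauli_strings n. expval n psi P \<noteq> 0}"

definition stab_group :: "nat \<Rightarrow> (nat \<Rightarrow> complex) \<Rightarrow> pauli list set" where
  "stab_group n psi = {P \<in> pauli_strings n.
      (\<forall>x<2^n. apply_pstr n P psi x = psi x) \<or> (\<forall>x<2^n. apply_pstr n P psi x = - psi x)}"

definition stab_nullity :: "nat \<Rightarrow> (nat \<Rightarrow> complex) \<Rightarrow> real" where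
  "stab_nullity n psi = real n - log 2 (real (card (stab_group n psi)))"

text \<open>Stabilizer alpha-Renyi entropy. For alpha \<noteq> 1 the sum is over P with Xi_P \<noteq> 0
  (for alpha > 0 zero terms contribute nothing; for alpha = 0 this is the stated convention).\<close>
definition stab_renyi :: "nat \<Rightarrow> (nat \<Rightarrow> complex) \<Rightarrow> real \<Rightarrow> real" where
  "stab_renyi n psi \<alpha> =
     (if \<alpha> = 1 then
        - (\<Sum>P\<in>{P \<in> pauli_strings n. Xi n psi P \<noteq> 0}. Xi n psi P * log 2 (Xi n psi P)) - log 2 (2 ^ n)
      else
        1 / (1 - \<alpha>) * log 2 (\<Sum>P\<in>{P \<in> pauli_strings n. Xi n psi P \<noteq> 0}. Xi n psi P powr \<alpha>)
          - log 2 (2 ^ n))"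

end

theory Submission
  imports Defs
begin

fun pmul :: "pauli \<Rightarrow> pauli \<Rightarrow> pauli" where
  "pmul PI b = b"
| "pmul a PI = a"
| "pmul PX PX = PI" | "pmul PX PY = PZ" | "pmul PX PZ = PY"
| "pmul PY PX = PZ" | "pmul PY PY = PI" | "pmul PY PZ = PX"
| "pmul PZ PX = PY" | "pmul PZ PY = PX" | "pmul PZ PZ = PI"

fun pphase :: "pauli \<Rightarrow> pauli \<Rightarrow> complex" where
  "pphase PX PY = \<i>" | "pphase PY PX = - \<i>"
| "pphase PY PZ = \<i>" | "pphase PZ PY = - \<i>"
| "pphase PZ PX = \<i>" | "pphase PX PZ = - \<i>"
| "pphase a b = 1"

fun chi1 :: "pauli \<Rightarrow> pauli \<Rightarrow> real" where
  "chi1 PI b = 1"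
| "chi1 a PI = 1"
| "chi1 a b = (if a = b then 1 else -1)"

lemma UNIV_pauli: "(UNIV :: pauli set) = {PI, PX, PY, PZ}"
  by (auto intro: pauli.exhaust)

lemma finite_pauli[simp]: "finite (UNIV :: pauli set)"
  by (simp add: UNIV_pauli)

lemma sum_pauli: "(\<Sum>a\<in>UNIV. f a) = f PI + f PX + f PY + f PZ"
  by (simp add: UNIV_pauli add.assoc)

lemma pe_mult: "pauli_entry a r False * pauli_entry c False s + pauli_entry a r True * pauli_entry c True s
   = pphase a c * pauli_entry (pmul a c) r s"
  by (cases a; cases c; cases r; cases s; simp)

lemma pe_herm: "cnj (pauli_entry a r c) = pauli_entry a c r"
  by (cases a; cases c; cases r; simp)

lemma pmul_invol: "pmul a (pmul a b) = b"
  by (cases a; cases b; simp)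

lemma pmul_conj: "pmul a (pmul b a) = b"
  by (cases a; cases b; simp)

lemma pphase_conj: "pphase b a * pphase a (pmul b a) = complex_of_real (chi1 a b)"
  by (cases a; cases b; simp)

lemma chi1_mult: "chi1 (pmul a b) c = chi1 a c * chi1 b c"
  by (cases a; cases b; cases c; simp)

lemma chi1_pm: "chi1 a b = 1 \<or> chi1 a b = -1"
  by (cases a; cases b; simp)

lemma chi1_sum: "(\<Sum>b\<in>UNIV. chi1 a b) = (if a = PI then 4 else 0)"
  unfolding sum_pauli by (cases a; simp)

lemma pphase_norm: "cmod (pphase a b) = 1"
  by (cases a; cases b; simp)

lemma pe_complete: "(\<Sum>a\<in>UNIV. pauli_entry a r c * cnj (pauli_entry a r' c'))
   = (if r = r' \<and> c = c' then 2 else 0)"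
  by (cases r; cases c; cases r'; cases c'; simp add: sum_pauli)

lemma lessThan_pow2_Suc:
  "{..<(2::nat)^Suc n} = (\<lambda>(b,y). of_bool b + 2*y) ` (UNIV \<times> {..<2^n})"
proof (rule set_eqI, rule iffI)
  fix y :: nat assume "y \<in> {..<2^Suc n}"
  then have "y = of_bool (odd y) + 2 * (y div 2)" "y div 2 < 2^n" by auto
  then show "y \<in> (\<lambda>(b,y). of_bool b + 2*y) ` (UNIV \<times> {..<2^n})" by force
qed auto

lemma inj_bits: "inj_on (\<lambda>(b::bool,y::nat). of_bool b + 2*y) X"
proof -
  have "a = c \<and> b = d" if "of_bool a + 2*b = of_bool c + 2*(d::nat)" for a b c d
    using that by (cases a; cases c; simp only: of_bool_eq; presburger)
  note key = this
  show ?thesis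
  proof (rule inj_onI)
    fix x y assume h: "(\<lambda>(b::bool,y::nat). of_bool b + 2*y) x = (\<lambda>(b::bool,y::nat). of_bool b + 2*y) y"
    obtain a b where x: "x = (a,b)" by fastforce
    obtain c d where y: "y = (c,d)" by fastforce
    have "of_bool a + 2*b = of_bool c + 2*(d::nat)" using h unfolding x y by (simp only: case_prod_conv)
    then show "x = y" using key unfolding x y by blast
  qed
qed

lemma sum_cart_mult:
  fixes g :: "'a \<Rightarrow> 'c::comm_semiring_0"
  shows "(\<Sum>(a,P)\<in>A \<times> B. g a * h P) = sum g A * sum h B"
  by (simp add: sum_product sum.cartesian_product)

lemma sum_bits:
  fixes g :: "nat \<Rightarrow> bool \<Rightarrow> 'a::comm_semiring_1"
  shows   "(\<Sum>y<(2::nat)^n. \<Prod>i<n. g i (bit y i)) = (\<Prod>i<n. g i False + g i True)"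
proof (induction n arbitrary: g)
  case 0
  then show ?case by simp
next
  case (Suc n)
  have "(\<Sum>y<(2::nat)^Suc n. \<Prod>i<Suc n. g i (bit y i))
     = (\<Sum>(b,y::nat)\<in>UNIV \<times> {..<2^n}. \<Prod>i<Suc n. g i (bit (of_bool b + 2*y) i))"
    unfolding lessThan_pow2_Suc by (subst sum.reindex[OF inj_bits]) (simp add: case_prod_beta)
  also have "\<dots> = (\<Sum>(b,y::nat)\<in>UNIV \<times> {..<2^n}. g 0 b * (\<Prod>i<n. g (Suc i) (bit y i)))"
    by (rule sum.cong[OF refl]) (auto simp del: prod.lessThan_Suc simp: prod.lessThan_Suc_shift bit_0 bit_Suc)
  also have "\<dots> = (\<Sum>b\<in>UNIV. g 0 b) * (\<Sum>y<(2::nat)^n. \<Prod>i<n. g (Suc i) (bit y i))"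
    by (rule sum_cart_mult)
  also have "\<dots> = (g 0 False + g 0 True) * (\<Prod>i<n. g (Suc i) False + g (Suc i) True)"
    using Suc.IH[of "\<lambda>i. g (Suc i)"] by (simp add: UNIV_bool)
  also have "\<dots> = (\<Prod>i<Suc n. g i False + g i True)"
    by (simp only: prod.lessThan_Suc_shift)
  finally show ?case .
qed

lemma pauli_strings_Suc:
  "pauli_strings (Suc n) = (\<lambda>(a,P). a # P) ` (UNIV \<times> pauli_strings n)"
  unfolding pauli_strings_def
  by (auto simp: length_Suc_conv image_iff)

lemma finite_pauli_strings[simp]: "finite (pauli_strings n)"
proof -
  have "pauli_strings n = {xs. set xs \<subseteq> UNIV \<and> length xs = n}"
    by (simp add: pauli_strings_def)
  then show ?thesis using finite_lists_length_eq[OF finite_pauli] by simp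
qed

lemma sum_strings:
  fixes f :: "nat \<Rightarrow> pauli \<Rightarrow> 'a::comm_semiring_1"
  shows   "(\<Sum>P\<in>pauli_strings n. \<Prod>i<n. f i (P!i)) = (\<Prod>i<n. \<Sum>a\<in>UNIV. f i a)"
proof (induction n arbitrary: f)
  case 0
  then show ?case by (simp add: pauli_strings_def)
next
  case (Suc n)
  have inj: "inj_on (\<lambda>(a::pauli,P). a # P) X" for X by (auto simp: inj_on_def)
  have "(\<Sum>P\<in>pauli_strings (Suc n). \<Prod>i<Suc n. f i (P!i))
     = (\<Sum>(a,P)\<in>UNIV \<times> pauli_strings n. \<Prod>i<Suc n. f i ((a#P)!i))"
    unfolding pauli_strings_Suc by (subst sum.reindex[OF inj]) (simp add: case_prod_beta)
  also have "\<dots> = (\<Sum>(a,P)\<in>UNIV \<times> pauli_strings n. f 0 a * (\<Prod>i<n. f (Suc i) (P!i)))"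
    by (rule sum.cong[OF refl]) (auto simp del: prod.lessThan_Suc simp: prod.lessThan_Suc_shift)
  also have "\<dots> = (\<Sum>a\<in>UNIV. f 0 a) * (\<Sum>P\<in>pauli_strings n. \<Prod>i<n. f (Suc i) (P!i))"
    by (rule sum_cart_mult)
  also have "\<dots> = (\<Prod>i<Suc n. \<Sum>a\<in>UNIV. f i a)"
    using Suc.IH[of "\<lambda>i. f (Suc i)"] by (simp only: prod.lessThan_Suc_shift)
  finally show ?case .
qed

definition pm :: "pauli list \<Rightarrow> pauli list \<Rightarrow> pauli list" where
  "pm P Q = map2 pmul P Q"

definition ph :: "nat \<Rightarrow> pauli list \<Rightarrow> pauli list \<Rightarrow> complex" where
  "ph n P Q = (\<Prod>i<n. pphase (P!i) (Q!i))"

definition chi :: "nat \<Rightarrow> pauli list \<Rightarrow> pauli list \<Rightarrow> real" where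
  "chi n P Q = (\<Prod>i<n. chi1 (P!i) (Q!i))"

definition inner :: "nat \<Rightarrow> (nat \<Rightarrow> complex) \<Rightarrow> (nat \<Rightarrow> complex) \<Rightarrow> complex" where
  "inner n f g = (\<Sum>x<2^n. cnj (f x) * g x)"

lemma pm_nth: "i < length P \<Longrightarrow> i < length Q \<Longrightarrow> pm P Q ! i = pmul (P!i) (Q!i)"
  by (simp add: pm_def)

lemma pm_length[simp]: "length (pm P Q) = min (length P) (length Q)"
  by (simp add: pm_def)

lemma apply_cong: "(\<And>y. y < 2^n \<Longrightarrow> f y = g y) \<Longrightarrow> apply_pstr n P f x = apply_pstr n P g x"
  unfolding apply_pstr_def by (rule sum.cong) auto

lemma apply_scale: "apply_pstr n P (\<lambda>y. c * f y) x = c * apply_pstr n P f x"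
  unfolding apply_pstr_def by (simp add: sum_distrib_left algebra_simps)

lemma entry_mult:
  assumes "length P = n" "length Q = n"
  shows "(\<Sum>y<2^n. pstr_entry n P x y * pstr_entry n Q y z) = ph n P Q * pstr_entry n (pm P Q) x z"
proof -
  have "(\<Sum>y<2^n. pstr_entry n P x y * pstr_entry n Q y z)
      = (\<Sum>y<(2::nat)^n. \<Prod>i<n. pauli_entry (P!i) (bit x i) (bit y i) * pauli_entry (Q!i) (bit y i) (bit z i))"
    unfolding pstr_entry_def by (simp add: prod.distrib)
  also have "\<dots> = (\<Prod>i<n. pauli_entry (P!i) (bit x i) False * pauli_entry (Q!i) False (bit z i)
       + pauli_entry (P!i) (bit x i) True * pauli_entry (Q!i) True (bit z i))"
    by (rule sum_bits)
  also have "\<dots> = (\<Prod>i<n. pphase (P!i) (Q!i) * pauli_entry (pm P Q ! i) (bit x i) (bit z i))"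
    by (rule prod.cong[OF refl]) (simp add: pe_mult pm_nth assms)
  also have "\<dots> = ph n P Q * pstr_entry n (pm P Q) x z"
    unfolding ph_def pstr_entry_def by (simp add: prod.distrib)
  finally show ?thesis .
qed

lemma apply_mult:
  assumes "length P = n" "length Q = n"
  shows "apply_pstr n P (apply_pstr n Q f) x = ph n P Q * apply_pstr n (pm P Q) f x"
proof -
  have "apply_pstr n P (apply_pstr n Q f) x
      = (\<Sum>y<2^n. \<Sum>z<2^n. pstr_entry n P x y * pstr_entry n Q y z * f z)"
    unfolding apply_pstr_def by (simp add: sum_distrib_left mult.assoc)
  also have "\<dots> = (\<Sum>z<2^n. (\<Sum>y<2^n. pstr_entry n P x y * pstr_entry n Q y z) * f z)"
    by (subst sum.swap) (simp add: sum_distrib_right)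
  also have "\<dots> = (\<Sum>z<2^n. ph n P Q * pstr_entry n (pm P Q) x z * f z)"
    by (simp add: entry_mult assms)
  also have "\<dots> = ph n P Q * apply_pstr n (pm P Q) f x"
    unfolding apply_pstr_def by (simp add: sum_distrib_left mult.assoc)
  finally show ?thesis .
qed

lemma entry_herm: "cnj (pstr_entry n P x y) = pstr_entry n P y x"
  unfolding pstr_entry_def by (simp add: pe_herm)

lemma inner_herm: "inner n f (apply_pstr n P g) = inner n (apply_pstr n P f) g"
proof -
  have "inner n f (apply_pstr n P g) = (\<Sum>x<2^n. \<Sum>y<2^n. cnj (f x) * pstr_entry n P x y * g y)"
    unfolding inner_def apply_pstr_def by (simp add: sum_distrib_left mult.assoc)
  also have "\<dots> = (\<Sum>y<2^n. \<Sum>x<2^n. cnj (f x) * pstr_entry n P x y * g y)"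
    by (rule sum.swap)
  also have "\<dots> = inner n (apply_pstr n P f) g"
    unfolding inner_def apply_pstr_def by (simp add: sum_distrib_left sum_distrib_right entry_herm mult_ac)
  finally show ?thesis .
qed

lemma cnj_inner: "cnj (inner n f g) = inner n g f"
  unfolding inner_def by (simp add: mult.commute)

lemma expval_inner: "expval n psi P = inner n psi (apply_pstr n P psi)"
  unfolding expval_def inner_def by simp

lemma expval_real: "cnj (expval n psi P) = expval n psi P"
  unfolding expval_inner cnj_inner by (simp add: inner_herm)

lemma inner_self: "pure_state n psi \<Longrightarrow> inner n psi psi = 1"
proof -
  assume "pure_state n psi"
  then have "(\<Sum>x<2^n. complex_of_real ((cmod (psi x))\<^sup>2)) = 1"
    unfolding pure_state_def by (metis of_real_1 of_real_sum)
  then show ?thesis unfolding inner_def complex_norm_square by (simp add: mult.commute)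
qed

lemma stabD:
  assumes "P \<in> stab_group n psi"
  obtains s where "s = 1 \<or> s = -1" "\<And>x. x < 2^n \<Longrightarrow> apply_pstr n P psi x = s * psi x" "length P = n"
  using assms unfolding stab_group_def pauli_strings_def
  by (metis (mono_tags, lifting) mem_Collect_eq mult_1 mult_minus1)

lemma bits_eq:
  fixes x y :: nat
  assumes "x < 2^n" "y < 2^n" "\<forall>i<n. bit x i = bit y i"
  shows "x = y"
proof -
  have "bit x i = bit y i" for i
  proof (cases "i < n")
    case True
    then show ?thesis using assms(3) by blast
  next
    case False
    then have "(2::nat)^n \<le> 2^i" by simp
    then have "x < 2^i" "y < 2^i" using assms by linarith+
    then have "x div 2^i = 0" "y div 2^i = 0" by simp_all
    then show ?thesis by (simp add: bit_iff_odd)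
  qed
  then show ?thesis by (simp add: bit_eq_iff)
qed

lemma entry_id:
  assumes "x < 2^n" "y < 2^n"
  shows "pstr_entry n (replicate n PI) x y = (if x = y then 1 else 0)"
proof (cases "x = y")
  case True
  then show ?thesis unfolding pstr_entry_def by simp
next
  case False
  then obtain i where i: "i < n" "bit x i \<noteq> bit y i" using bits_eq assms by blast
  have "pstr_entry n (replicate n PI) x y = 0"
    unfolding pstr_entry_def
  proof (rule prod_zero)
    show "\<exists>a\<in>{..<n}. pauli_entry (replicate n PI ! a) (bit x a) (bit y a) = 0"
      using i by (intro bexI[of _ i]) auto
  qed simp
  then show ?thesis using False by simp
qed

lemma apply_id: "x < 2^n \<Longrightarrow> apply_pstr n (replicate n PI) f x = f x"
proof -
  assume x: "x < 2^n"
  have "apply_pstr n (replicate n PI) f x = (\<Sum>y<2^n. (if x = y then f y else 0))"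
    unfolding apply_pstr_def by (rule sum.cong) (auto simp: entry_id x)
  also have "\<dots> = f x" using x by simp
  finally show ?thesis .
qed

lemma id_stab: "replicate n PI \<in> stab_group n psi"
  unfolding stab_group_def pauli_strings_def by (simp add: apply_id)

lemma stab_sub: "stab_group n psi \<subseteq> pauli_strings n"
  unfolding stab_group_def by auto

lemma finite_stab: "finite (stab_group n psi)"
  by (rule finite_subset[OF stab_sub finite_pauli_strings])

lemma pm_conj: "length P = n \<Longrightarrow> length Q = n \<Longrightarrow> pm P (pm Q P) = Q"
  by (rule nth_equalityI) (auto simp: pm_nth pmul_conj)

lemma pm_invol: "length P = n \<Longrightarrow> length Q = n \<Longrightarrow> pm P (pm P Q) = Q"
  by (rule nth_equalityI) (auto simp: pm_nth pmul_invol)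

lemma ph_conj: "length P = n \<Longrightarrow> length Q = n \<Longrightarrow>
   ph n Q P * ph n P (pm Q P) = complex_of_real (chi n P Q)"
  unfolding ph_def chi_def by (simp add: prod.distrib[symmetric] pm_nth pphase_conj)

lemma chi_mult: "length P = n \<Longrightarrow> length P' = n \<Longrightarrow> length Q = n \<Longrightarrow>
   chi n (pm P P') Q = chi n P Q * chi n P' Q"
  unfolding chi_def by (simp add: prod.distrib[symmetric] pm_nth chi1_mult)

lemma chi_pm: "chi n P Q = 1 \<or> chi n P Q = -1"
proof -
  have "\<bar>chi n P Q\<bar> = (\<Prod>i<n. \<bar>chi1 (P!i) (Q!i)\<bar>)"
    unfolding chi_def using prod_norm[of "\<lambda>i. chi1 (P!i) (Q!i)" "{..<n}"] by simp
  also have "\<dots> = 1"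
  proof (rule prod.neutral, intro ballI)
    fix i show "\<bar>chi1 (P!i) (Q!i)\<bar> = 1" using chi1_pm[of "P!i" "Q!i"] by auto
  qed
  finally show ?thesis by linarith
qed

lemma ph_norm: "cmod (ph n P Q) = 1"
  unfolding ph_def prod_norm[symmetric] by (simp add: pphase_norm)

lemma chi_sum:
  assumes "length P = n"
  shows "(\<Sum>Q\<in>pauli_strings n. chi n P Q) = (if P = replicate n PI then 4^n else 0)"
proof -
  have "(\<Sum>Q\<in>pauli_strings n. chi n P Q) = (\<Prod>i<n. \<Sum>a\<in>UNIV. chi1 (P!i) a)"
    unfolding chi_def by (rule sum_strings)
  also have "\<dots> = (\<Prod>i<n. if P!i = PI then 4 else 0)"
    by (simp add: chi1_sum)
  also have "\<dots> = (if P = replicate n PI then 4^n else 0)"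
  proof (cases "P = replicate n PI")
    case True
    then show ?thesis by simp
  next
    case False
    then obtain i where "i < n" "P!i \<noteq> PI" using assms
      by (metis in_set_conv_nth replicate_eqI)
    then show ?thesis using False
      by (intro prod_zero[THEN trans[OF _ sym]]) (auto intro!: bexI[of _ i])
  qed
  finally show ?thesis .
qed

lemma inner_scale: "inner n f (\<lambda>x. c * g x) = c * inner n f g"
  unfolding inner_def by (simp add: sum_distrib_left mult_ac)

lemma stab_commute:
  assumes P: "P \<in> stab_group n psi" and Q: "length Q = n" and nz: "expval n psi Q \<noteq> 0"
  shows "chi n P Q = 1"
proof -
  obtain s where s: "s = 1 \<or> s = -1" "\<And>x. x < 2^n \<Longrightarrow> apply_pstr n P psi x = s * psi x"
    and lP: "length P = n"
    using stabD[OF P] by metis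
  define phi where "phi = apply_pstr n P psi"
  have h1: "apply_pstr n Q phi x = s * apply_pstr n Q psi x" for x
  proof -
    have "apply_pstr n Q phi x = apply_pstr n Q (\<lambda>y. s * psi y) x"
      unfolding phi_def by (rule apply_cong) (simp add: s)
    then show ?thesis by (simp add: apply_scale)
  qed
  have ss: "cnj s * s = 1" using s by auto
  have h2: "inner n phi (apply_pstr n Q phi) = expval n psi Q"
  proof -
    have "inner n phi (apply_pstr n Q phi) = (\<Sum>x<2^n. (cnj s * s) * (cnj (psi x) * apply_pstr n Q psi x))"
      unfolding inner_def h1 by (rule sum.cong) (auto simp: phi_def s mult_ac)
    then show ?thesis unfolding ss expval_def by simp
  qed
  have h4: "apply_pstr n Q phi = (\<lambda>x. ph n Q P * apply_pstr n (pm Q P) psi x)"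
    unfolding phi_def by (rule ext) (simp add: apply_mult Q lP)
  have h5: "apply_pstr n P (apply_pstr n Q phi) x = complex_of_real (chi n P Q) * apply_pstr n Q psi x" for x
  proof -
    have "apply_pstr n P (apply_pstr n Q phi) x = ph n Q P * apply_pstr n P (apply_pstr n (pm Q P) psi) x"
      unfolding h4 by (rule apply_scale)
    also have "\<dots> = ph n Q P * (ph n P (pm Q P) * apply_pstr n (pm P (pm Q P)) psi x)"
      by (simp add: apply_mult Q lP)
    also have "\<dots> = complex_of_real (chi n P Q) * apply_pstr n Q psi x"
      using ph_conj[OF lP Q] pm_conj[OF lP Q] by (simp add: mult.assoc[symmetric])
    finally show ?thesis .
  qed
  have "expval n psi Q = inner n psi (apply_pstr n P (apply_pstr n Q phi))"
    using h2 unfolding phi_def by (simp add: inner_herm)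
  also have "\<dots> = complex_of_real (chi n P Q) * expval n psi Q"
    unfolding h5 inner_scale expval_inner ..
  finally have "(1 - complex_of_real (chi n P Q)) * expval n psi Q = 0"
    by (simp add: algebra_simps)
  then have "complex_of_real (chi n P Q) = 1" using nz by simp
  then show ?thesis by (metis of_real_eq_1_iff)
qed

lemma stab_closed:
  assumes P: "P \<in> stab_group n psi" and P': "P' \<in> stab_group n psi" and pure: "pure_state n psi"
  shows "pm P P' \<in> stab_group n psi"
proof -
  obtain s where s: "s = 1 \<or> s = -1" "\<And>x. x < 2^n \<Longrightarrow> apply_pstr n P psi x = s * psi x"
    and lP: "length P = n"
    using stabD[OF P] by metis
  obtain s' where s': "s' = 1 \<or> s' = -1" "\<And>x. x < 2^n \<Longrightarrow> apply_pstr n P' psi x = s' * psi x"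
    and lP': "length P' = n"
    using stabD[OF P'] by metis
  define w where "w = ph n P P'"
  define lam where "lam = s * s' / w"
  have wn: "cmod w = 1" unfolding w_def by (rule ph_norm)
  then have w0: "w \<noteq> 0" by auto
  have R: "apply_pstr n (pm P P') psi x = lam * psi x" if x: "x < 2^n" for x
  proof -
    have "w * apply_pstr n (pm P P') psi x = apply_pstr n P (apply_pstr n P' psi) x"
      unfolding w_def by (simp add: apply_mult lP lP')
    also have "\<dots> = apply_pstr n P (\<lambda>y. s' * psi y) x"
      by (rule apply_cong) (simp add: s')
    also have "\<dots> = s' * (s * psi x)" by (simp add: apply_scale s x)
    finally show ?thesis unfolding lam_def using w0 by (simp add: field_simps)
  qed
  have "expval n psi (pm P P') = inner n psi (\<lambda>x. lam * psi x)"
    unfolding expval_inner inner_def by (rule sum.cong) (simp_all add: R)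
  also have "\<dots> = lam" by (simp add: inner_scale inner_self[OF pure])
  finally have ev: "expval n psi (pm P P') = lam" .
  have lr: "cnj lam = lam" using expval_real[of n psi "pm P P'"] unfolding ev .
  have ln: "cmod lam = 1" unfolding lam_def using s s' wn by (auto simp: norm_divide)
  have "Im lam = 0" using lr by (simp add: complex_eq_iff)
  then have lre: "lam = complex_of_real (Re lam)" by (simp add: complex_eq_iff)
  have "\<bar>Re lam\<bar> = 1" using ln \<open>Im lam = 0\<close> by (simp add: cmod_def)
  then have "Re lam = 1 \<or> Re lam = -1" by linarith
  then have lpm: "lam = 1 \<or> lam = -1" using lre by (metis of_real_1 of_real_minus)
  have mem: "pm P P' \<in> pauli_strings n" by (simp add: pauli_strings_def lP lP')
  have "(\<forall>x<2^n. apply_pstr n (pm P P') psi x = psi x) \<or> (\<forall>x<2^n. apply_pstr n (pm P P') psi x = - psi x)"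
  proof (cases "lam = 1")
    case True
    then show ?thesis using R by simp
  next
    case False
    then have "lam = -1" using lpm by blast
    then show ?thesis using R by simp
  qed
  then show ?thesis using mem unfolding stab_group_def by blast
qed

lemma N_nonneg:
  assumes Q: "length Q = n" and pure: "pure_state n psi"
  shows "(\<Sum>P\<in>stab_group n psi. chi n P Q) \<ge> 0"
proof (cases "\<exists>P0\<in>stab_group n psi. chi n P0 Q \<noteq> 1")
  case True
  then obtain P0 where P0: "P0 \<in> stab_group n psi" "chi n P0 Q \<noteq> 1" by blast
  then have c: "chi n P0 Q = -1" using chi_pm by metis
  have l0: "length P0 = n" using P0(1) stab_sub unfolding pauli_strings_def by blast
  have len: "length P = n" if "P \<in> stab_group n psi" for P
    using that stab_sub unfolding pauli_strings_def by blast
  have "(\<Sum>P\<in>stab_group n psi. chi n (pm P0 P) Q) = (\<Sum>P\<in>stab_group n psi. chi n P Q)"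
  proof (rule sum.reindex_bij_witness[of _ "pm P0" "pm P0"])
    fix a assume a: "a \<in> stab_group n psi"
    show "pm P0 (pm P0 a) = a" using pm_invol[OF l0 len[OF a]] .
    show "pm P0 a \<in> stab_group n psi" using stab_closed[OF P0(1) a pure] .
    show "chi n (pm P0 a) Q = chi n (pm P0 a) Q" ..
  next
    fix b assume b: "b \<in> stab_group n psi"
    show "pm P0 (pm P0 b) = b" using pm_invol[OF l0 len[OF b]] .
    show "pm P0 b \<in> stab_group n psi" using stab_closed[OF P0(1) b pure] .
  qed
  moreover have "(\<Sum>P\<in>stab_group n psi. chi n (pm P0 P) Q) = - (\<Sum>P\<in>stab_group n psi. chi n P Q)"
    by (simp add: chi_mult l0 len Q c sum_negf)
  ultimately have "(\<Sum>P\<in>stab_group n psi. chi n P Q) = 0" by linarith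
  then show ?thesis by simp
next
  case False
  then show ?thesis by (intro sum_nonneg) auto
qed

lemma main_count:
  assumes pure: "pure_state n psi"
  shows "real (pauli_card n psi) * real (card (stab_group n psi)) \<le> 4^n"
proof -
  define A where "A = {Q \<in> pauli_strings n. expval n psi Q \<noteq> 0}"
  define S where "S = stab_group n psi"
  have A_sub: "A \<subseteq> pauli_strings n" unfolding A_def by blast
  have lenQ: "length Q = n" if "Q \<in> pauli_strings n" for Q using that unfolding pauli_strings_def by simp
  have lenP: "length P = n" if "P \<in> S" for P using that stab_sub unfolding S_def pauli_strings_def by blast
  have "real (card A) * real (card S) = (\<Sum>Q\<in>A. \<Sum>P\<in>S. chi n P Q)"
  proof -
    have "(\<Sum>Q\<in>A. \<Sum>P\<in>S. chi n P Q) = (\<Sum>Q\<in>A. \<Sum>P\<in>S. 1)"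
    proof (rule sum.cong[OF refl], rule sum.cong[OF refl])
      fix Q P assume "Q \<in> A" "P \<in> S"
      then show "chi n P Q = 1" using stab_commute[of P n psi Q] lenQ unfolding A_def S_def by blast
    qed
    then show ?thesis by simp
  qed
  also have "\<dots> \<le> (\<Sum>Q\<in>pauli_strings n. \<Sum>P\<in>S. chi n P Q)"
    by (rule sum_mono2[OF finite_pauli_strings A_sub]) (use N_nonneg[OF _ pure] lenQ in \<open>auto simp: S_def\<close>)
  also have "\<dots> = (\<Sum>P\<in>S. \<Sum>Q\<in>pauli_strings n. chi n P Q)"
    by (rule sum.swap)
  also have "\<dots> = (\<Sum>P\<in>S. if P = replicate n PI then 4^n else 0)"
    by (rule sum.cong[OF refl]) (simp add: chi_sum lenP)
  also have "\<dots> = 4^n"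
    using id_stab[of n psi] finite_stab[of n psi] unfolding S_def by simp
  finally show ?thesis unfolding pauli_card_def A_def S_def .
qed

lemma K_eq:
  assumes "x < 2^n" "y < 2^n" "x' < 2^n" "y' < 2^n"
  shows "(\<Sum>P\<in>pauli_strings n. pstr_entry n P x y * cnj (pstr_entry n P x' y'))
     = (if x = x' \<and> y = y' then 2^n else 0)"
proof -
  have "(\<Sum>P\<in>pauli_strings n. pstr_entry n P x y * cnj (pstr_entry n P x' y'))
     = (\<Sum>P\<in>pauli_strings n. \<Prod>i<n. pauli_entry (P!i) (bit x i) (bit y i) * cnj (pauli_entry (P!i) (bit x' i) (bit y' i)))"
    unfolding pstr_entry_def by (simp add: prod.distrib)
  also have "\<dots> = (\<Prod>i<n. \<Sum>a\<in>UNIV. pauli_entry a (bit x i) (bit y i) * cnj (pauli_entry a (bit x' i) (bit y' i)))"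
    by (rule sum_strings)
  also have "\<dots> = (\<Prod>i<n. if bit x i = bit x' i \<and> bit y i = bit y' i then 2 else 0)"
    by (simp only: pe_complete)
  also have "\<dots> = (if x = x' \<and> y = y' then 2^n else 0)"
  proof (cases "x = x' \<and> y = y'")
    case True
    then show ?thesis by simp
  next
    case False
    then obtain i where i: "i < n" "\<not> (bit x i = bit x' i \<and> bit y i = bit y' i)"
      using bits_eq[of x n x'] bits_eq[of y n y'] assms by blast
    have "(\<Prod>i<n. if bit x i = bit x' i \<and> bit y i = bit y' i then 2 else 0) = (0::complex)"
    proof (rule prod_zero)
      show "\<exists>a\<in>{..<n}. (if bit x a = bit x' a \<and> bit y a = bit y' a then 2 else 0) = (0::complex)"
        using i by (intro bexI[of _ i]) auto
    qed simp
    then show ?thesis using False by simp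
  qed
  finally show ?thesis .
qed

lemma expval_pairs:
  "expval n psi P = (\<Sum>u\<in>{..<(2::nat)^n} \<times> {..<2^n}. cnj (psi (fst u)) * psi (snd u) * pstr_entry n P (fst u) (snd u))"
proof -
  have "expval n psi P = (\<Sum>x<(2::nat)^n. \<Sum>y<(2::nat)^n. cnj (psi x) * psi y * pstr_entry n P x y)"
    unfolding expval_def apply_pstr_def by (simp add: sum_distrib_left mult_ac)
  also have "\<dots> = (\<Sum>u\<in>{..<(2::nat)^n} \<times> {..<2^n}. cnj (psi (fst u)) * psi (snd u) * pstr_entry n P (fst u) (snd u))"
    by (simp add: sum.cartesian_product case_prod_beta)
  finally show ?thesis .
qed

lemma parseval:
  assumes pure: "pure_state n psi"
  shows "(\<Sum>P\<in>pauli_strings n. (cmod (expval n psi P))\<^sup>2) = 2^n"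
proof -
  define D where "D = {..<(2::nat)^n} \<times> {..<(2::nat)^n}"
  define a where "a u = cnj (psi (fst u)) * psi (snd u)" for u
  define E where "E P u = pstr_entry n P (fst u) (snd u)" for P u
  have ev: "expval n psi P = (\<Sum>u\<in>D. a u * E P u)" for P
    unfolding expval_pairs D_def a_def E_def ..
  have fD: "finite D" unfolding D_def by simp
  have "complex_of_real (\<Sum>P\<in>pauli_strings n. (cmod (expval n psi P))\<^sup>2)
      = (\<Sum>P\<in>pauli_strings n. expval n psi P * cnj (expval n psi P))"
    by (simp only: of_real_sum complex_norm_square)
  also have "\<dots> = (\<Sum>P\<in>pauli_strings n. \<Sum>u\<in>D. \<Sum>v\<in>D. (a u * cnj (a v)) * (E P u * cnj (E P v)))"
    unfolding ev by (simp add: sum_product mult_ac)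
  also have "\<dots> = (\<Sum>u\<in>D. \<Sum>v\<in>D. \<Sum>P\<in>pauli_strings n. (a u * cnj (a v)) * (E P u * cnj (E P v)))"
    by (subst sum.swap) (subst (2) sum.swap, rule refl)
  also have "\<dots> = (\<Sum>u\<in>D. \<Sum>v\<in>D. (a u * cnj (a v)) * (if u = v then 2^n else 0))"
  proof (intro sum.cong refl)
    fix u v assume "u \<in> D" "v \<in> D"
    then have m: "fst u < 2^n" "snd u < 2^n" "fst v < 2^n" "snd v < 2^n" unfolding D_def by auto
    have K: "(\<Sum>P\<in>pauli_strings n. E P u * cnj (E P v)) = (if u = v then 2^n else 0)"
      unfolding E_def using K_eq[OF m] by (simp add: prod_eq_iff)
    show "(\<Sum>P\<in>pauli_strings n. (a u * cnj (a v)) * (E P u * cnj (E P v))) = (a u * cnj (a v)) * (if u = v then 2^n else 0)"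
      by (simp only: sum_distrib_left[symmetric] K)
  qed
  also have "\<dots> = (\<Sum>u\<in>D. (a u * cnj (a u)) * 2^n)"
    by (rule sum.cong[OF refl]) (simp add: fD if_distrib cong: if_cong)
  also have "\<dots> = (\<Sum>u\<in>D. 2^n * complex_of_real ((cmod (psi (fst u)))\<^sup>2 * (cmod (psi (snd u)))\<^sup>2))"
    by (rule sum.cong[OF refl]) (simp only: of_real_mult complex_norm_square a_def complex_cnj_mult complex_cnj_cnj; simp add: mult_ac)
  also have "\<dots> = 2^n * (\<Sum>u\<in>D. complex_of_real ((cmod (psi (fst u)))\<^sup>2 * (cmod (psi (snd u)))\<^sup>2))"
    by (simp only: sum_distrib_left)
  also have "\<dots> = 2^n * complex_of_real (\<Sum>u\<in>D. (cmod (psi (fst u)))\<^sup>2 * (cmod (psi (snd u)))\<^sup>2)"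
    by (simp only: of_real_sum)
  finally have F: "complex_of_real (\<Sum>P\<in>pauli_strings n. (cmod (expval n psi P))\<^sup>2)
     = 2^n * complex_of_real (\<Sum>u\<in>D. (cmod (psi (fst u)))\<^sup>2 * (cmod (psi (snd u)))\<^sup>2)" .
  have R: "(\<Sum>u\<in>D. (cmod (psi (fst u)))\<^sup>2 * (cmod (psi (snd u)))\<^sup>2)
     = (\<Sum>x<2^n. (cmod (psi x))\<^sup>2) * (\<Sum>y<2^n. (cmod (psi y))\<^sup>2)"
    unfolding D_def by (simp add: sum_product sum.cartesian_product case_prod_beta)
  have one: "(\<Sum>x<2^n. (cmod (psi x))\<^sup>2) * (\<Sum>y<2^n. (cmod (psi y))\<^sup>2) = 1"
    using pure unfolding pure_state_def by simp
  have "complex_of_real (\<Sum>P\<in>pauli_strings n. (cmod (expval n psi P))\<^sup>2) = complex_of_real (2^n)"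
    using F unfolding R one by simp
  then show ?thesis by (simp only: of_real_eq_iff)
qed

lemma young1: fixes a x :: real shows "0 \<le> a \<Longrightarrow> a \<le> 1 \<Longrightarrow> x > 0 \<Longrightarrow> x powr a \<le> a * x + (1 - a)"
  using Youngs_inequality_0[of a "1 - a" x 1] by simp

lemma bern_ge: fixes a x :: real shows "a \<ge> 1 \<Longrightarrow> x > 0 \<Longrightarrow> x powr a \<ge> a * x - a + 1"
proof -
  assume a: "a \<ge> 1" and x: "x > 0"
  have "(x powr a) powr (1/a) \<le> (1/a) * (x powr a) + (1 - 1/a)"
    using young1[of "1/a" "x powr a"] a x by simp
  moreover have "(x powr a) powr (1/a) = x" using a x by (simp add: powr_powr)
  ultimately have "x \<le> (1/a) * (x powr a) + (1 - 1/a)" by simp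
  then have "a * x \<le> a * ((1/a) * (x powr a) + (1 - 1/a))" using a by simp
  also have "\<dots> = x powr a + a - 1" using a by (simp add: algebra_simps)
  finally show ?thesis by simp
qed

lemma shannon_bound:
  fixes p :: "'a \<Rightarrow> real"
  assumes fin: "finite B" and pos: "\<And>b. b \<in> B \<Longrightarrow> p b > 0" and s1: "(\<Sum>b\<in>B. p b) = 1"
  shows "- (\<Sum>b\<in>B. p b * log 2 (p b)) \<le> log 2 (real (card B))"
proof -
  define N where "N = real (card B)"
  have Bne: "B \<noteq> {}" using s1 by auto
  then have N0: "N > 0" unfolding N_def using fin by (simp add: card_gt_0_iff)
  have "p b * ln (1 / (N * p b)) \<le> 1/N - p b" if b: "b \<in> B" for b
  proof -
    have "ln (1 / (N * p b)) \<le> 1 / (N * p b) - 1" using ln_le_minus_one pos[OF b] N0 by simp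
    then have "p b * ln (1 / (N * p b)) \<le> p b * (1 / (N * p b) - 1)"
      using pos[OF b] by (simp add: mult_left_mono)
    also have "\<dots> = 1/N - p b" using pos[OF b] N0 by (simp add: field_simps)
    finally show ?thesis .
  qed
  then have "(\<Sum>b\<in>B. p b * ln (1 / (N * p b))) \<le> (\<Sum>b\<in>B. 1/N - p b)"
    by (rule sum_mono)
  also have "\<dots> = 0" using s1 N0 by (simp add: sum_subtractf N_def)
  finally have A: "(\<Sum>b\<in>B. p b * ln (1 / (N * p b))) \<le> 0" .
  have "(\<Sum>b\<in>B. p b * ln (1 / (N * p b))) = - (\<Sum>b\<in>B. p b * ln (p b)) - ln N"
  proof -
    have "(\<Sum>b\<in>B. p b * ln (1 / (N * p b))) = (\<Sum>b\<in>B. - (p b * ln (p b)) - p b * ln N)"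
      by (rule sum.cong[OF refl]) (use pos N0 in \<open>simp add: ln_div ln_mult algebra_simps\<close>)
    also have "\<dots> = - (\<Sum>b\<in>B. p b * ln (p b)) - ln N"
      by (simp add: sum_subtractf sum_negf sum_distrib_right[symmetric] s1)
    finally show ?thesis .
  qed
  with A have H: "- (\<Sum>b\<in>B. p b * ln (p b)) \<le> ln N" by simp
  have "- (\<Sum>b\<in>B. p b * ln (p b)) / ln 2 \<le> ln N / ln 2" by (rule divide_right_mono[OF H]) simp
  moreover have "- (\<Sum>b\<in>B. p b * log 2 (p b)) = - (\<Sum>b\<in>B. p b * ln (p b)) / ln 2"
    by (simp add: log_def sum_divide_distrib)
  ultimately show ?thesis unfolding N_def by (simp add: log_def)
qed

lemma renyi_bound:
  fixes p :: "'a \<Rightarrow> real"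
  assumes fin: "finite B" and pos: "\<And>b. b \<in> B \<Longrightarrow> p b > 0" and s1: "(\<Sum>b\<in>B. p b) = 1"
    and a0: "a \<ge> 0" and a1: "a \<noteq> 1"
  shows "1 / (1 - a) * log 2 (\<Sum>b\<in>B. p b powr a) \<le> log 2 (real (card B))"
proof -
  define N where "N = real (card B)"
  define S where "S = (\<Sum>b\<in>B. p b powr a)"
  have Bne: "B \<noteq> {}" using s1 by auto
  then have N0: "N > 0" unfolding N_def using fin by (simp add: card_gt_0_iff)
  have S0: "S > 0" unfolding S_def
  proof (rule sum_pos[OF fin Bne])
    fix b assume "b \<in> B"
    then have "p b > 0" by (rule pos)
    then show "p b powr a > 0" by simp
  qed
  have NpS: "N powr a * S = (\<Sum>b\<in>B. (N * p b) powr a)"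
    unfolding S_def sum_distrib_left using N0 pos by (intro sum.cong refl) (simp add: powr_mult)
  have sumlin: "(\<Sum>b\<in>B. a * (N * p b) + c) = a * N + c * N" for c
  proof -
    have "(\<Sum>b\<in>B. a * (N * p b)) = a * N * (\<Sum>b\<in>B. p b)" by (simp add: sum_distrib_left mult_ac)
    then show ?thesis using s1 by (simp add: sum.distrib N_def)
  qed
  have NN: "N powr a * N powr (1 - a) = N" using N0 by (simp add: powr_add[symmetric])
  show ?thesis
  proof (cases "a < 1")
    case True
    have "N powr a * S \<le> (\<Sum>b\<in>B. a * (N * p b) + (1 - a))"
      unfolding NpS using pos N0 a0 True by (intro sum_mono young1) auto
    also have "\<dots> = N" using sumlin[of "1 - a"] by (simp add: algebra_simps)
    finally have "N powr a * S \<le> N powr a * N powr (1 - a)" using NN by simp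
    then have "S \<le> N powr (1 - a)" using N0 by simp
    then have "log 2 S \<le> log 2 (N powr (1 - a))" using S0 N0 by (subst log_le_cancel_iff) auto
    also have "\<dots> = (1 - a) * log 2 N" using N0 by (simp add: log_powr)
    finally have "log 2 S \<le> (1 - a) * log 2 N" .
    then show ?thesis unfolding S_def[symmetric] N_def[symmetric] using True
      by (simp add: divide_le_eq mult.commute)
  next
    case False
    then have a1': "a > 1" using a1 by simp
    have "N = (\<Sum>b\<in>B. a * (N * p b) - a + 1)" using sumlin[of "1 - a"] by (simp add: algebra_simps)
    also have "\<dots> \<le> N powr a * S"
      unfolding NpS using pos N0 a1' by (intro sum_mono bern_ge) auto
    finally have "N powr a * N powr (1 - a) \<le> N powr a * S" using NN by simp
    then have "N powr (1 - a) \<le> S" using N0 by simp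
    then have "log 2 (N powr (1 - a)) \<le> log 2 S" using S0 N0 by (subst log_le_cancel_iff) auto
    moreover have "log 2 (N powr (1 - a)) = (1 - a) * log 2 N" using N0 by (simp add: log_powr)
    ultimately have "(1 - a) * log 2 N \<le> log 2 S" by simp
    then show ?thesis unfolding S_def[symmetric] N_def[symmetric] using a1'
      by (simp add: le_divide_eq_1 divide_le_eq mult.commute neg_divide_le_eq)
  qed
qed

lemma expval_id: "pure_state n psi \<Longrightarrow> expval n psi (replicate n PI) = 1"
proof -
  assume pure: "pure_state n psi"
  have "expval n psi (replicate n PI) = inner n psi psi"
    unfolding expval_def inner_def by (rule sum.cong) (simp_all add: apply_id)
  then show ?thesis using inner_self[OF pure] by simp
qed

lemma Xi_facts:
  "Xi n psi P = (cmod (expval n psi P))\<^sup>2 / 2^n \<and> (Xi n psi P \<noteq> 0 \<longleftrightarrow> expval n psi P \<noteq> 0)"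
proof -
  define c where "c = expval n psi P"
  have "cnj c = c" unfolding c_def by (rule expval_real)
  then have "Im c = 0" by (simp add: complex_eq_iff)
  then have ce: "c = complex_of_real (Re c)" by (simp add: complex_eq_iff)
  have "Re (c\<^sup>2) = (Re c)\<^sup>2" by (subst ce) (simp only: of_real_power[symmetric] Re_complex_of_real)
  moreover have "(cmod c)\<^sup>2 = (Re c)\<^sup>2" by (subst ce) (simp only: norm_of_real power2_abs)
  ultimately have "Xi n psi P = (cmod c)\<^sup>2 / 2^n" unfolding Xi_def c_def by simp
  moreover have "(cmod c)\<^sup>2 / 2^n \<noteq> 0 \<longleftrightarrow> c \<noteq> 0" by simp
  ultimately show ?thesis unfolding c_def by simp
qed

theorem mainTheorem2:
  fixes n :: nat and psi :: "nat \<Rightarrow> complex"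
  assumes "n \<ge> 1"
    and "pure_state n psi"
  shows "real (card (stab_group n psi)) \<le> (2 ^ n)\<^sup>2 / real (pauli_card n psi)
     \<and> stab_renyi n psi 0 \<le> stab_nullity n psi
     \<and> (\<forall>\<alpha>::real. \<alpha> \<ge> 0 \<longrightarrow> stab_renyi n psi \<alpha> \<le> stab_nullity n psi)"
proof -
  note pure = assms(2)
  define A where "A = {P \<in> pauli_strings n. expval n psi P \<noteq> 0}"
  define N where "N = real (pauli_card n psi)"
  define T where "T = real (card (stab_group n psi))"
  have NA: "N = real (card A)" unfolding N_def pauli_card_def A_def ..
  have finA: "finite A" unfolding A_def by simp
  have "replicate n PI \<in> A" unfolding A_def pauli_strings_def using expval_id[OF pure] by simp
  then have N0: "N > 0" unfolding NA using finA by (auto simp: card_gt_0_iff)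
  have T0: "T > 0" unfolding T_def using id_stab[of n psi] finite_stab[of n psi] by (auto simp: card_gt_0_iff)
  have cnt: "N * T \<le> 4^n" unfolding N_def T_def by (rule main_count[OF pure])
  have sq: "((2::real)^n)\<^sup>2 = 4^n"
  proof -
    have "((2::real)^n)\<^sup>2 = (2^2)^n" by (simp only: power_mult[symmetric] mult.commute)
    then show ?thesis by simp
  qed
  have c1: "T \<le> (2^n)\<^sup>2 / N" unfolding sq using cnt N0 by (simp add: pos_le_divide_eq mult.commute)
  have lg: "log 2 N + log 2 T \<le> 2 * real n"
  proof -
    have "log 2 N + log 2 T = log 2 (N * T)" using N0 T0 by (simp add: log_mult_pos)
    also have "\<dots> \<le> log 2 (4^n)" using N0 T0 cnt by (subst log_le_cancel_iff) auto
    also have "(4::real)^n = 2^(2*n)" by (simp add: power_mult)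
    then have "log 2 ((4::real)^n) = real (2*n)" by simp
    finally show ?thesis by simp
  qed
  have nul: "stab_nullity n psi = real n - log 2 T" unfolding stab_nullity_def T_def ..
  define B where "B = {P \<in> pauli_strings n. Xi n psi P \<noteq> 0}"
  have BA: "B = A" unfolding A_def B_def using Xi_facts by blast
  have finB: "finite B" unfolding B_def by simp
  have posB: "Xi n psi P > 0" if "P \<in> B" for P
  proof -
    have "Xi n psi P \<ge> 0" using Xi_facts[of n psi P] by simp
    then show ?thesis using that unfolding B_def by auto
  qed
  have s1: "(\<Sum>P\<in>B. Xi n psi P) = 1"
  proof -
    have "(\<Sum>P\<in>B. Xi n psi P) = (\<Sum>P\<in>pauli_strings n. Xi n psi P)"
      by (rule sum.mono_neutral_left) (auto simp: B_def)
    also have "\<dots> = (\<Sum>P\<in>pauli_strings n. (cmod (expval n psi P))\<^sup>2) / 2^n"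
      using Xi_facts by (simp add: sum_divide_distrib)
    also have "\<dots> = 1" using parseval[OF pure] by simp
    finally show ?thesis .
  qed
  have cardB: "real (card B) = N" unfolding BA NA ..
  have l2n: "log 2 ((2::real)^n) = real n" by simp
  have ren: "stab_renyi n psi a \<le> log 2 N - real n" if a: "a \<ge> 0" for a
  proof (cases "a = 1")
    case True
    have "- (\<Sum>P\<in>B. Xi n psi P * log 2 (Xi n psi P)) \<le> log 2 (real (card B))"
      by (rule shannon_bound[OF finB posB s1])
    then show ?thesis using True unfolding stab_renyi_def B_def[symmetric] cardB l2n by simp
  next
    case False
    have "1 / (1 - a) * log 2 (\<Sum>P\<in>B. Xi n psi P powr a) \<le> log 2 (real (card B))"
      by (rule renyi_bound[OF finB posB s1 a False])
    then show ?thesis using False unfolding stab_renyi_def B_def[symmetric] cardB l2n by simp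
  qed
  have fin: "stab_renyi n psi a \<le> stab_nullity n psi" if "a \<ge> 0" for a
    using ren[OF that] lg unfolding nul by linarith
  show ?thesis using c1 fin unfolding N_def T_def by auto
qed

end
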